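(* Let $N\in\mathbb N$, $\Sigma_N=\{1,\ldots,N\}^{\mathbb Z}$, and let $\Sigma_A\subset\{1,\ldots,2N\}^{\mathbb Z}$ and $\pi\colon\Sigma_A\to\Sigma_N$ be as in the context. Every Markov measure $\lambda_0$ on $\Sigma_N$ has a unique symmetric extension, i.e. there is exactly one symmetric Markov measure $\lambda$ on $\Sigma_A$ with $\pi_*\lambda=\lambda_0$.
   Context: Given $C^1$-diffeomorphisms onto their images $f_1,\ldots,f_N$ of $[0,1]$, let $\mathcal I_P$ / $\mathcal I_R$ be the indices of orientation preserving / reversing $f_i$. $A=(a_{ij})_{i,j=1}^{2N}$ with $a_{ij}=1$ if ($i\in\mathcal I_P$, $j\le N$), or ($i\in\mathcal I_R$, $j>N$), or ($i-N\in\mathcal I_P$, $j>N$), or ($i-N\in\mathcal I_R$, $j\le N$), else $0$; $\Sigma_A$ the set of $\omega\in\{1,\ldots,2N\}^{\mathbb Z}$ with $a_{\omega_n\omega_{n+1}}=1$ for all $n$; $\pi(\omega)_n=\overline{\omega_n}$ with $\overline i=i$ for $i\le N$, $\overline i=i-N$ otherwise. A Markov measure on $\Sigma_A$ is given by a probability vector $(p_1,\ldots,p_{2N})$ and a stochastic matrix $(P_{ij})$ compatible with $A$, via $\lambda(\{\eta\colon\eta_k=\omega_k,\ m\le k\le n\})=p_{\omega_m}P_{\omega_m\omega_{m+1}}\cdots P_{\omega_{n-1}\omega_n}$. It is symmetric if $p_i=p_{i+N}$, $P_{ij}=P_{(i+N)(j+N)}$ and $P_{i(j+N)}=P_{(i+N)j}$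 for all $i,j=1,\ldots,N$. *)

theory Defs
  imports "HOL-Probability.Probability"
begin

definition C1_diffeo_01 :: "(real \<Rightarrow> real) \<Rightarrow> bool" where
  "C1_diffeo_01 g \<longleftrightarrow> (\<exists>g'. continuous_on {0..1} g' \<and>
      (\<forall>x\<in>{0..1}. (g has_real_derivative g' x) (at x within {0..1}) \<and> g' x \<noteq> 0))"

definition orient_pres :: "nat \<Rightarrow> (nat \<Rightarrow> real \<Rightarrow> real) \<Rightarrow> nat set" where
  "orient_pres N f = {i\<in>{1..N}. strict_mono_on {0..1} (f i)}"

definition orient_rev :: "nat \<Rightarrow> (nat \<Rightarrow> real \<Rightarrow> real) \<Rightarrow> nat set" where
  "orient_rev N f = {i\<in>{1..N}. strict_antimono_on {0..1} (f i)}"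

text \<open>The transition matrix A (entries a_ij = 1 encoded as True).\<close>
definition trans_A :: "nat \<Rightarrow> nat set \<Rightarrow> nat set \<Rightarrow> nat \<Rightarrow> nat \<Rightarrow> bool" where
  "trans_A N IP IR i j \<longleftrightarrow>
     (i \<in> IP \<and> j \<le> N) \<or> (i \<in> IR \<and> j > N) \<or>
     (i > N \<and> i - N \<in> IP \<and> j > N) \<or> (i > N \<and> i - N \<in> IR \<and> j \<le> N)"

definition shift_space :: "nat \<Rightarrow> (int \<Rightarrow> nat) measure" where
  "shift_space K = PiM UNIV (\<lambda>_. count_space {1..K})"

definition Sigma_A :: "nat \<Rightarrow> nat set \<Rightarrow> nat set \<Rightarrow> (int \<Rightarrow> nat) set" where
  "Sigma_A N IP IR = {\<omega> \<in> space (shift_space (2*N)).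
      \<forall>n. trans_A N IP IR (\<omega> n) (\<omega> (n+1))}"

definition bar :: "nat \<Rightarrow> nat \<Rightarrow> nat" where
  "bar N i = (if i \<le> N then i else i - N)"

definition proj :: "nat \<Rightarrow> (int \<Rightarrow> nat) \<Rightarrow> (int \<Rightarrow> nat)" where
  "proj N \<omega> = (\<lambda>n. bar N (\<omega> n))"

definition markov_measure ::
  "nat \<Rightarrow> (nat \<Rightarrow> nat \<Rightarrow> bool) \<Rightarrow> (int \<Rightarrow> nat) set \<Rightarrow> (int \<Rightarrow> nat) measure
     \<Rightarrow> (nat \<Rightarrow> real) \<Rightarrow> (nat \<Rightarrow> nat \<Rightarrow> real) \<Rightarrow> bool" where
  "markov_measure K adm S lam p P \<longleftrightarrow>
     (\<forall>i\<in>{1..K}. p i \<ge> 0) \<and> (\<Sum>i=1..K. p i) = 1 \<and>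
     (\<forall>i\<in>{1..K}. \<forall>j\<in>{1..K}. P i j \<ge> 0) \<and>
     (\<forall>i\<in>{1..K}. (\<Sum>j=1..K. P i j) = 1) \<and>
     (\<forall>i\<in>{1..K}. \<forall>j\<in>{1..K}. \<not> adm i j \<longrightarrow> P i j = 0) \<and>
     prob_space lam \<and> sets lam = sets (restrict_space (shift_space K) S) \<and>
     (\<forall>\<omega>\<in>S. \<forall>m n. m \<le> n \<longrightarrow>
        measure lam {\<eta>\<in>S. \<forall>k\<in>{m..n}. \<eta> k = \<omega> k}
          = p (\<omega> m) * (\<Prod>k\<in>{m..<n}. P (\<omega> k) (\<omega> (k+1))))"

definition symmetric_params :: "nat \<Rightarrow> (nat \<Rightarrow> real) \<Rightarrow> (nat \<Rightarrow> nat \<Rightarrow> real) \<Rightarrow> bool" where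
  "symmetric_params N p P \<longleftrightarrow>
     (\<forall>i\<in>{1..N}. p i = p (i+N)) \<and>
     (\<forall>i\<in>{1..N}. \<forall>j\<in>{1..N}. P i j = P (i+N) (j+N) \<and> P i (j+N) = P (i+N) j)"

definition symmetric_markov_measure ::
  "nat \<Rightarrow> nat set \<Rightarrow> nat set \<Rightarrow> (int \<Rightarrow> nat) measure \<Rightarrow> bool" where
  "symmetric_markov_measure N IP IR lam \<longleftrightarrow>
     (\<exists>p P. markov_measure (2*N) (trans_A N IP IR) (Sigma_A N IP IR) lam p P
            \<and> symmetric_params N p P)"

end

theory Submission
  imports Defs
begin


lemma orient_C1:
  assumes "C1_diffeo_01 g"
  shows "strict_mono_on {0..1} g \<or> strict_antimono_on {0..1} g"
proof -
  obtain g' where c: "continuous_on {0..1} g'" and d: "\<And>x. x\<in>{0..1} \<Longrightarrow> (g has_real_derivative g' x) (at x within {0..1})"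
    and nz: "\<And>x. x\<in>{0..1} \<Longrightarrow> g' x \<noteq> 0"
    using assms unfolding C1_diffeo_01_def by blast
  have cg: "continuous_on {0..1} g" by (rule DERIV_continuous_on[OF d])
  have dat: "(g has_real_derivative g' x) (at x)" if "0 < x" "x < 1" for x
  proof -
    have "x \<in> interior {0..(1::real)}" using that by simp
    then have "at x within {0..1} = at x" by (rule at_within_interior)
    then show ?thesis using d[of x] that by simp
  qed
  have sign: "(\<forall>x\<in>{0..1}. g' x > 0) \<or> (\<forall>x\<in>{0..1}. g' x < 0)"
  proof (rule ccontr)
    assume "\<not> ?thesis"
    then obtain a b where ab: "a\<in>{0..1}" "b\<in>{0..1}" "g' a > 0" "g' b < 0"
      using nz by (metis linorder_neqE_linordered_idom)
    show False
    proof (cases "a \<le> b")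
      case True
      have "continuous_on {a..b} g'" using c ab by (auto intro: continuous_on_subset)
      then obtain x where "a \<le> x" "x \<le> b" "g' x = 0" using IVT2'[of g' b 0 a] ab True by auto
      then show False using nz[of x] ab by auto
    next
      case False
      have "continuous_on {b..a} g'" using c ab by (auto intro: continuous_on_subset)
      then obtain x where "b \<le> x" "x \<le> a" "g' x = 0" using IVT'[of g' b 0 a] ab False by auto
      then show False using nz[of x] ab by auto
    qed
  qed
  then show ?thesis
  proof
    assume pos: "\<forall>x\<in>{0..1}. g' x > 0"
    have "strict_mono_on {0..1} g"
    proof (rule strict_mono_onI)
      fix r s :: real assume rs: "r \<in> {0..1}" "s \<in> {0..1}" "r < s"
      show "g r < g s"
      proof (rule DERIV_pos_imp_increasing_open[OF \<open>r<s\<close>])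
        fix x assume "r < x" "x < s"
        then show "\<exists>y. DERIV g x :> y \<and> y > 0" using rs pos dat[of x] by auto
      next
        show "continuous_on {r..s} g" using cg rs by (auto intro: continuous_on_subset)
      qed
    qed
    then show ?thesis ..
  next
    assume neg: "\<forall>x\<in>{0..1}. g' x < 0"
    have "strict_antimono_on {0..1} g"
    proof (rule monotone_onI)
      fix r s :: real assume rs: "r \<in> {0..1}" "s \<in> {0..1}" "r < s"
      show "g s < g r"
      proof (rule DERIV_neg_imp_decreasing_open[OF \<open>r<s\<close>])
        fix x assume "r < x" "x < s"
        then show "\<exists>y. DERIV g x :> y \<and> y < 0" using rs neg dat[of x] by auto
      next
        show "continuous_on {r..s} g" using cg rs by (auto intro: continuous_on_subset)
      qed
    qed
    then show ?thesis ..
  qed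
qed

lemma orient_disj:
  "orient_pres N f \<inter> orient_rev N f = {}"
proof -
  { fix i assume "strict_mono_on {0..1::real} (f i)" "strict_antimono_on {0..1::real} (f i)"
    then have "f i 0 < f i 1" "f i 1 < f i 0" by (auto simp: monotone_on_def)
    then have False by simp }
  then show ?thesis unfolding orient_pres_def orient_rev_def by blast
qed

lemma orient_cover:
  assumes "\<forall>i\<in>{1..N}. C1_diffeo_01 (f i)"
  shows "orient_pres N f \<union> orient_rev N f = {1..N}"
  using orient_C1 assms unfolding orient_pres_def orient_rev_def by blast



definition flip :: "nat \<Rightarrow> nat \<Rightarrow> nat" where
  "flip N a = (if a \<le> N then a + N else a - N)"

definition fl :: "nat \<Rightarrow> (int \<Rightarrow> nat) \<Rightarrow> (int \<Rightarrow> nat)" where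
  "fl N \<omega> = (\<lambda>k. flip N (\<omega> k))"

lemma space_shift: "\<omega> \<in> space (shift_space K) \<longleftrightarrow> (\<forall>k. \<omega> k \<in> {1..K})"
  by (simp add: shift_space_def space_PiM PiE_def extensional_def Pi_def)

lemma in_SA: "\<omega> \<in> Sigma_A N IP IR \<longleftrightarrow> (\<forall>k. \<omega> k \<in> {1..2*N}) \<and> (\<forall>n. trans_A N IP IR (\<omega> n) (\<omega> (n+1)))"
  by (simp add: Sigma_A_def space_shift)

lemma trans_A_flip:
  assumes "IP \<subseteq> {1..N}" "IR \<subseteq> {1..N}" "a \<in> {1..2*N}" "b \<in> {1..2*N}"
  shows "trans_A N IP IR (flip N a) (flip N b) = trans_A N IP IR a b"
  using assms unfolding trans_A_def flip_def by (auto split: if_splits)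

lemma fl_S:
  assumes "IP \<subseteq> {1..N}" "IR \<subseteq> {1..N}" "\<omega> \<in> Sigma_A N IP IR"
  shows "fl N \<omega> \<in> Sigma_A N IP IR"
proof -
  have "\<forall>k. \<omega> k \<in> {1..2*N}" using assms(3) by (simp add: in_SA)
  have "\<forall>k. fl N \<omega> k \<in> {1..2*N}"
  proof
    fix k
    have "\<omega> k \<in> {1..2*N}" using \<open>\<forall>k. \<omega> k \<in> {1..2*N}\<close> by blast
    then show "fl N \<omega> k \<in> {1..2*N}" unfolding fl_def flip_def by auto
  qed
  moreover have "trans_A N IP IR (fl N \<omega> n) (fl N \<omega> (n+1))" for n
    using trans_A_flip[OF assms(1,2), of "\<omega> n" "\<omega> (n+1)"] assms(3) \<open>\<forall>k. \<omega> k \<in> {1..2*N}\<close>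
    by (simp add: fl_def in_SA)
  ultimately show ?thesis by (simp add: in_SA)
qed

lemma trans_det:
  assumes "IP \<inter> IR = {}" "IP \<subseteq> {1..N}" "IR \<subseteq> {1..N}"
    "a \<in> {1..2*N}" "b \<in> {1..2*N}" "b' \<in> {1..2*N}"
    "trans_A N IP IR a b" "trans_A N IP IR a b'" "bar N b = bar N b'"
  shows "b = b'"
  using assms unfolding trans_A_def bar_def by (auto split: if_splits)

lemma window_det:
  assumes "IP \<inter> IR = {}" "IP \<subseteq> {1..N}" "IR \<subseteq> {1..N}"
    "\<xi> \<in> Sigma_A N IP IR" "\<eta> \<in> Sigma_A N IP IR"
    "\<forall>k\<in>{m..n}. bar N (\<xi> k) = bar N (\<eta> k)" "\<xi> m = \<eta> m"
  shows "\<forall>k\<in>{m..n}. \<xi> k = \<eta> k"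
proof -
  have X: "\<forall>k. \<xi> k \<in> {1..2*N}" "\<forall>k. trans_A N IP IR (\<xi> k) (\<xi> (k+1))"
    "\<forall>k. \<eta> k \<in> {1..2*N}" "\<forall>k. trans_A N IP IR (\<eta> k) (\<eta> (k+1))"
    using assms(4,5) by (auto simp: in_SA)
  have "m + int j \<le> n \<longrightarrow> \<xi> (m + int j) = \<eta> (m + int j)" for j
  proof (induction j)
    case 0 then show ?case using assms(7) by simp
  next
    case (Suc j)
    show ?case
    proof
      assume le: "m + int (Suc j) \<le> n"
      then have e: "\<xi> (m + int j) = \<eta> (m + int j)" using Suc by simp
      have "bar N (\<xi> (m + int j + 1)) = bar N (\<eta> (m + int j + 1))" using assms(6) le by auto
      then have "\<xi> (m + int j + 1) = \<eta> (m + int j + 1)"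
        using trans_det[OF assms(1,2,3), of "\<xi> (m + int j)" "\<xi> (m + int j + 1)" "\<eta> (m + int j + 1)"] X e
        by metis
      then show "\<xi> (m + int (Suc j)) = \<eta> (m + int (Suc j))" by (simp add: ac_simps)
    qed
  qed
  then show ?thesis
    by (metis atLeastAtMost_iff zle_iff_zadd)
qed

lemma bar_eq_cases:
  assumes "a \<in> {1..2*N}" "b \<in> {1..2*N}" "bar N a = bar N b"
  shows "b = a \<or> b = flip N a"
  using assms unfolding bar_def flip_def by (auto split: if_splits)

lemma bar_flip[simp]: "a \<in> {1..2*N} \<Longrightarrow> bar N (flip N a) = bar N a"
  unfolding bar_def flip_def by auto

lemma flip_neq: "a \<in> {1..2*N} \<Longrightarrow> flip N a \<noteq> a"
  unfolding flip_def by auto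

lemma preimage_cyl:
  assumes "IP \<inter> IR = {}" "IP \<subseteq> {1..N}" "IR \<subseteq> {1..N}" "\<omega> \<in> Sigma_A N IP IR"
  shows "{\<eta>\<in>Sigma_A N IP IR. \<forall>k\<in>{m..n}. bar N (\<eta> k) = bar N (\<omega> k)}
       = {\<eta>\<in>Sigma_A N IP IR. \<forall>k\<in>{m..n}. \<eta> k = \<omega> k} \<union> {\<eta>\<in>Sigma_A N IP IR. \<forall>k\<in>{m..n}. \<eta> k = fl N \<omega> k}"
    (is "?L = ?A \<union> ?B")
proof
  have om: "\<forall>k. \<omega> k \<in> {1..2*N}" using assms(4) by (simp add: in_SA)
  show "?A \<union> ?B \<subseteq> ?L"
  proof
    fix \<eta> assume "\<eta> \<in> ?A \<union> ?B"
    then show "\<eta> \<in> ?L"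
    proof
      assume "\<eta> \<in> ?A" then show ?thesis by auto
    next
      assume "\<eta> \<in> ?B"
      then have "\<eta> \<in> Sigma_A N IP IR" "\<forall>k\<in>{m..n}. \<eta> k = flip N (\<omega> k)" unfolding fl_def by auto
      then show ?thesis using om bar_flip by auto
    qed
  qed
  show "?L \<subseteq> ?A \<union> ?B"
  proof
    fix \<eta> assume h: "\<eta> \<in> ?L"
    then have eS: "\<eta> \<in> Sigma_A N IP IR" and bb: "\<forall>k\<in>{m..n}. bar N (\<eta> k) = bar N (\<omega> k)" by auto
    have et: "\<forall>k. \<eta> k \<in> {1..2*N}" using eS by (simp add: in_SA)
    show "\<eta> \<in> ?A \<union> ?B"
    proof (cases "m \<le> n")
      case False then show ?thesis using eS by auto
    next
      case True
      have "bar N (\<eta> m) = bar N (\<omega> m)" using bb True by auto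
      then have "\<eta> m = \<omega> m \<or> \<eta> m = flip N (\<omega> m)" using bar_eq_cases om et by metis
      then show ?thesis
      proof
        assume "\<eta> m = \<omega> m"
        then have "\<forall>k\<in>{m..n}. \<eta> k = \<omega> k"
          using window_det[OF assms(1,2,3) eS assms(4) bb] by blast
        then show ?thesis using eS by auto
      next
        assume "\<eta> m = flip N (\<omega> m)"
        then have e1: "\<eta> m = fl N \<omega> m" by (simp add: fl_def)
        have bb2: "\<forall>k\<in>{m..n}. bar N (\<eta> k) = bar N (fl N \<omega> k)"
        proof
          fix k assume "k \<in> {m..n}"
          then have "bar N (\<eta> k) = bar N (\<omega> k)" using bb by blast
          moreover have "bar N (fl N \<omega> k) = bar N (\<omega> k)" unfolding fl_def using om bar_flip by blast
          ultimately show "bar N (\<eta> k) = bar N (fl N \<omega> k)" by simp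
        qed
        have "\<forall>k\<in>{m..n}. \<eta> k = fl N \<omega> k"
          by (rule window_det[OF assms(1,2,3) eS fl_S[OF assms(2,3,4)] bb2 e1])
        then show ?thesis using eS by auto
      qed
    qed
  qed
qed

lemma cyl_disj:
  assumes "\<omega> \<in> Sigma_A N IP IR" "m \<le> n"
  shows "{\<eta>\<in>Sigma_A N IP IR. \<forall>k\<in>{m..n}. \<eta> k = \<omega> k} \<inter> {\<eta>\<in>Sigma_A N IP IR. \<forall>k\<in>{m..n}. \<eta> k = fl N \<omega> k} = {}"
proof -
  have "\<omega> m \<in> {1..2*N}" using assms by (simp add: in_SA)
  have "\<eta> \<notin> {\<eta>\<in>Sigma_A N IP IR. \<forall>k\<in>{m..n}. \<eta> k = \<omega> k} \<inter> {\<eta>\<in>Sigma_A N IP IR. \<forall>k\<in>{m..n}. \<eta> k = fl N \<omega> k}" for \<eta>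
  proof
    assume "\<eta> \<in> {\<eta>\<in>Sigma_A N IP IR. \<forall>k\<in>{m..n}. \<eta> k = \<omega> k} \<inter> {\<eta>\<in>Sigma_A N IP IR. \<forall>k\<in>{m..n}. \<eta> k = fl N \<omega> k}"
    then have "\<eta> m = \<omega> m" "\<eta> m = fl N \<omega> m" using assms(2) by auto
    then show False using flip_neq[OF \<open>\<omega> m \<in> {1..2*N}\<close>] unfolding fl_def by simp
  qed
  then show ?thesis by blast
qed



definition Wd :: "int \<Rightarrow> int set" where "Wd n = {0..<n} \<union> {n..<0}"

definition par :: "nat set \<Rightarrow> (int \<Rightarrow> nat) \<Rightarrow> int \<Rightarrow> nat" where
  "par IR \<xi> n = (\<Sum>k\<in>Wd n. if \<xi> k \<in> IR then 1 else 0)"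

definition sheet :: "nat set \<Rightarrow> bool \<Rightarrow> (int \<Rightarrow> nat) \<Rightarrow> int \<Rightarrow> bool" where
  "sheet IR s \<xi> n = (s \<noteq> odd (par IR \<xi> n))"

definition lift :: "nat \<Rightarrow> nat set \<Rightarrow> bool \<Rightarrow> (int \<Rightarrow> nat) \<Rightarrow> (int \<Rightarrow> nat)" where
  "lift N IR s \<xi> = (\<lambda>n. if sheet IR s \<xi> n then \<xi> n + N else \<xi> n)"

lemma finite_Wd[simp]: "finite (Wd n)" by (simp add: Wd_def)

lemma par_step: "odd (par IR \<xi> (n+1)) = (odd (par IR \<xi> n) \<noteq> (\<xi> n \<in> IR))"
proof (cases "n \<ge> 0")
  case True
  then have "Wd (n+1) = insert n (Wd n)" "n \<notin> Wd n" by (auto simp: Wd_def)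
  then have "par IR \<xi> (n+1) = (if \<xi> n \<in> IR then 1 else 0) + par IR \<xi> n"
    unfolding par_def by simp
  then show ?thesis by auto
next
  case False
  then have "Wd n = insert n (Wd (n+1))" "n \<notin> Wd (n+1)" by (auto simp: Wd_def)
  then have "par IR \<xi> n = (if \<xi> n \<in> IR then 1 else 0) + par IR \<xi> (n+1)"
    unfolding par_def by simp
  then show ?thesis by auto
qed

lemma sheet_step: "sheet IR s \<xi> (n+1) = (sheet IR s \<xi> n \<noteq> (\<xi> n \<in> IR))"
  unfolding sheet_def using par_step[of IR \<xi> n] by blast

lemma lift_S:
  assumes "IP \<union> IR = {1..N}" "\<xi> \<in> space (shift_space N)"
  shows "lift N IR s \<xi> \<in> Sigma_A N IP IR"
proof -
  have xi: "\<forall>k. \<xi> k \<in> {1..N}" using assms(2) by (simp add: space_shift)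
  have "\<forall>k. lift N IR s \<xi> k \<in> {1..2*N}"
  proof
    fix k show "lift N IR s \<xi> k \<in> {1..2*N}" using xi[rule_format, of k] by (auto simp: lift_def)
  qed
  moreover have "trans_A N IP IR (lift N IR s \<xi> n) (lift N IR s \<xi> (n+1))" for n
  proof -
    have a: "\<xi> n \<in> {1..N}" "\<xi> (n+1) \<in> {1..N}" using xi by auto
    have st: "sheet IR s \<xi> (n+1) = (sheet IR s \<xi> n \<noteq> (\<xi> n \<in> IR))" by (rule sheet_step)
    have "\<xi> n \<in> IR \<or> \<xi> n \<in> IP" using a assms(1) by auto
    then show ?thesis using a st unfolding lift_def trans_A_def by auto
  qed
  ultimately show ?thesis by (simp add: in_SA)
qed

lemma bar_lift: "\<xi> k \<in> {1..N} \<Longrightarrow> bar N (lift N IR s \<xi> k) = \<xi> k"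
  by (auto simp: lift_def bar_def)

lemma lift_cyl:
  assumes "IP \<inter> IR = {}" "IP \<union> IR = {1..N}" "\<omega> \<in> Sigma_A N IP IR" "m \<le> n"
  shows "{\<xi>\<in>space (shift_space N). \<forall>k\<in>{m..n}. \<xi> k = bar N (\<omega> k)}
     = {\<xi>\<in>space (shift_space N). \<forall>k\<in>{m..n}. lift N IR True \<xi> k = \<omega> k}
     \<union> {\<xi>\<in>space (shift_space N). \<forall>k\<in>{m..n}. lift N IR False \<xi> k = \<omega> k}"
   (is "?L = ?A \<union> ?B")
  and "{\<xi>\<in>space (shift_space N). \<forall>k\<in>{m..n}. lift N IR True \<xi> k = \<omega> k}
     \<inter> {\<xi>\<in>space (shift_space N). \<forall>k\<in>{m..n}. lift N IR False \<xi> k = \<omega> k} = {}"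
proof -
  have sub: "IP \<subseteq> {1..N}" "IR \<subseteq> {1..N}" using assms(2) by auto
  have om: "\<forall>k. \<omega> k \<in> {1..2*N}" using assms(3) by (simp add: in_SA)
  show "?A \<inter> ?B = {}"
  proof -
    have "\<xi> \<notin> ?A \<inter> ?B" for \<xi>
    proof
      assume "\<xi> \<in> ?A \<inter> ?B"
      then have "lift N IR True \<xi> m = lift N IR False \<xi> m" "\<xi> m \<in> {1..N}"
        using assms(4) by (auto simp: space_shift)
      then show False unfolding lift_def sheet_def by (auto split: if_splits)
    qed
    then show ?thesis by blast
  qed
  show "?L = ?A \<union> ?B"
  proof
    show "?A \<union> ?B \<subseteq> ?L"
    proof
      fix \<xi> assume h: "\<xi> \<in> ?A \<union> ?B"
      then have xs: "\<xi> \<in> space (shift_space N)" by auto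
      then have "\<forall>k. \<xi> k \<in> {1..N}" by (simp add: space_shift)
      moreover obtain s where "\<forall>k\<in>{m..n}. lift N IR s \<xi> k = \<omega> k" using h by auto
      ultimately have "\<forall>k\<in>{m..n}. \<xi> k = bar N (\<omega> k)" using bar_lift by metis
      then show "\<xi> \<in> ?L" using xs by auto
    qed
    show "?L \<subseteq> ?A \<union> ?B"
    proof
      fix \<xi> assume h: "\<xi> \<in> ?L"
      then have xs: "\<xi> \<in> space (shift_space N)" and bb: "\<forall>k\<in>{m..n}. \<xi> k = bar N (\<omega> k)" by auto
      have xi: "\<forall>k. \<xi> k \<in> {1..N}" using xs by (simp add: space_shift)
      have "\<exists>s. lift N IR s \<xi> m = \<omega> m"
      proof -
        have "\<xi> m = bar N (\<omega> m)" using bb assms(4) by auto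
        then have "\<omega> m = \<xi> m \<or> \<omega> m = \<xi> m + N" using om[rule_format, of m] by (auto simp: bar_def split: if_splits)
        then show ?thesis unfolding lift_def sheet_def by (metis (full_types))
      qed
      then obtain s where s: "lift N IR s \<xi> m = \<omega> m" by blast
      have LS: "lift N IR s \<xi> \<in> Sigma_A N IP IR" by (rule lift_S[OF assms(2) xs])
      have "\<forall>k\<in>{m..n}. bar N (lift N IR s \<xi> k) = bar N (\<omega> k)" using bb xi bar_lift by metis
      then have "\<forall>k\<in>{m..n}. lift N IR s \<xi> k = \<omega> k"
        by (rule window_det[OF assms(1) sub LS assms(3) _ s])
      then show "\<xi> \<in> ?A \<union> ?B" using xs by (cases s) auto
    qed
  qed
qed



lemma shift_meas_into:
  assumes "\<And>i. (\<lambda>\<omega>. f i \<omega>) \<in> measurable M (count_space {1..K})"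
    and "\<And>\<omega> i. \<omega> \<in> space M \<Longrightarrow> f i \<omega> \<in> {1..K}"
  shows "(\<lambda>\<omega> i. f i \<omega>) \<in> measurable M (shift_space K)"
  unfolding shift_space_def
  by (rule measurable_PiM_single') (use assms in \<open>auto simp: space_PiM PiE_iff\<close>)

lemma proj_meas0: "proj N \<in> measurable (shift_space (2*N)) (shift_space N)"
  unfolding proj_def
proof (rule shift_meas_into)
  fix i :: int
  show "(\<lambda>\<omega>. bar N (\<omega> i)) \<in> measurable (shift_space (2*N)) (count_space {1..N})"
    unfolding shift_space_def
    by (rule measurable_compose[OF measurable_component_singleton[of i UNIV]])
       (auto simp: measurable_count_space_eq1 bar_def)
next
  fix \<omega> i assume "\<omega> \<in> space (shift_space (2 * N))"
  then have "\<omega> i \<in> {1..2*N}" by (simp add: space_shift)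
  then show "bar N (\<omega> i) \<in> {1..N}" by (auto simp: bar_def)
qed

lemma proj_meas: "proj N \<in> measurable (restrict_space (shift_space (2*N)) S) (shift_space N)"
  by (rule measurable_restrict_space1[OF proj_meas0])

lemma coord_meas: "(\<lambda>\<eta>. \<eta> k) \<in> measurable (shift_space K) (count_space {1..K})"
  unfolding shift_space_def by (rule measurable_component_singleton) simp

lemma cyl_sets: "{\<eta>\<in>space (shift_space K). \<forall>k\<in>{m..n}. \<eta> k = x k} \<in> sets (shift_space K)"
proof (cases "{m..n} = {}")
  case True then show ?thesis by simp
next
  case False
  have "{\<eta>\<in>space (shift_space K). \<eta> k = x k} \<in> sets (shift_space K)" for k
  proof -
    show ?thesis
    proof (cases "x k \<in> {1..K}")
      case True
      have "{\<eta>\<in>space (shift_space K). \<eta> k = x k} = (\<lambda>\<eta>. \<eta> k) -` {x k} \<inter> space (shift_space K)"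
        by auto
      also have "\<dots> \<in> sets (shift_space K)" by (rule measurable_sets[OF coord_meas]) (use True in simp)
      finally show ?thesis .
    next
      case False
      have ne: "\<eta> k \<noteq> x k" if "\<eta> \<in> space (shift_space K)" for \<eta>
      proof -
        have "\<eta> k \<in> {1..K}" using that by (simp add: space_shift)
        then show "\<eta> k \<noteq> x k" using False by metis
      qed
      have "{\<eta>\<in>space (shift_space K). \<eta> k = x k} = {}" using ne by blast
      then show ?thesis by (metis sets.empty_sets)
    qed
  qed
  then show ?thesis
    by (intro sets.sets_Collect_finite_All) auto
qed

lemma cylS_sets: "{\<eta>\<in>S. \<forall>k\<in>{m..n}. \<eta> k = x k} \<in> sets (restrict_space (shift_space K) S)"
  if "S \<subseteq> space (shift_space K)"
proof -
  have "{\<eta>\<in>S. \<forall>k\<in>{m..n}. \<eta> k = x k} = S \<inter> {\<eta>\<in>space (shift_space K). \<forall>k\<in>{m..n}. \<eta> k = x k}"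
    using that by auto
  then show ?thesis using cyl_sets[of K m n x] by (auto simp: sets_restrict_space)
qed

lemma SA_sub: "Sigma_A N IP IR \<subseteq> space (shift_space (2*N))"
  by (auto simp: Sigma_A_def)

lemma SA_sets: "Sigma_A N IP IR \<in> sets (shift_space (2*N))"
proof -
  have "{\<omega>\<in>space (shift_space (2*N)). trans_A N IP IR (\<omega> n) (\<omega> (n+1))} \<in> sets (shift_space (2*N))" for n
  proof -
    have m: "(\<lambda>\<omega>. (\<omega> n, \<omega> (n+1))) \<in> measurable (shift_space (2*N)) (count_space ({1..2*N} \<times> {1..2*N}))"
      unfolding pair_measure_count_space[symmetric, OF finite_atLeastAtMost finite_atLeastAtMost]
      by (intro measurable_Pair coord_meas)
    have "{\<omega>\<in>space (shift_space (2*N)). trans_A N IP IR (\<omega> n) (\<omega> (n+1))}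
      = (\<lambda>\<omega>. (\<omega> n, \<omega> (n+1))) -` {(a,b). a \<in> {1..2*N} \<and> b \<in> {1..2*N} \<and> trans_A N IP IR a b} \<inter> space (shift_space (2*N))"
      by (auto simp: space_shift)
    also have "\<dots> \<in> sets (shift_space (2*N))" by (rule measurable_sets[OF m]) auto
    finally show ?thesis .
  qed
  then have "{\<omega>\<in>space (shift_space (2*N)). \<forall>n. trans_A N IP IR (\<omega> n) (\<omega> (n+1))} \<in> sets (shift_space (2*N))"
    by (intro sets.sets_Collect_countable_All) auto
  then show ?thesis by (simp add: Sigma_A_def)
qed

lemma lift_local:
  assumes "\<forall>k\<in>insert n (Wd n). \<xi> k = \<xi>' k"
  shows "lift N IR s \<xi> n = lift N IR s \<xi>' n"
proof -
  have "par IR \<xi> n = par IR \<xi>' n" unfolding par_def using assms by (intro sum.cong) auto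
  then show ?thesis using assms unfolding lift_def sheet_def by simp
qed

lemma lift_meas:
  assumes "IP \<union> IR = {1..N}"
  shows "(\<lambda>x. lift N IR (snd x) (fst x)) \<in> measurable (shift_space N \<Otimes>\<^sub>M count_space UNIV) (restrict_space (shift_space (2*N)) (Sigma_A N IP IR))"
proof (rule measurable_restrict_space2)
  show "(\<lambda>x. lift N IR (snd x) (fst x)) \<in> space (shift_space N \<Otimes>\<^sub>M count_space UNIV) \<rightarrow> Sigma_A N IP IR"
    using lift_S[OF assms] by (auto simp: space_pair_measure)
  show "(\<lambda>x. lift N IR (snd x) (fst x)) \<in> measurable (shift_space N \<Otimes>\<^sub>M count_space UNIV) (shift_space (2*N))"
    unfolding shift_space_def[of "2*N"]
  proof (rule measurable_PiM_single')
    fix n :: int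
    define J where "J = insert n (Wd n)"
    have fJ: "finite J" by (simp add: J_def)
    have fb: "finite (UNIV::bool set)" by simp
    have fP: "finite (PiE J (\<lambda>_. {1..N}))" using fJ by (simp add: finite_PiE)
    have eq: "lift N IR (snd x) (fst x) n = (\<lambda>(r,s). lift N IR s r n) (restrict (fst x) J, snd x)" for x
      by (simp add: case_prod_beta, rule lift_local) (simp add: J_def)
    have m1: "(\<lambda>x. (restrict (fst x) J, snd x)) \<in> measurable (shift_space N \<Otimes>\<^sub>M count_space UNIV)
        (PiM J (\<lambda>_. count_space {1..N}) \<Otimes>\<^sub>M count_space UNIV)"
      unfolding shift_space_def
      by (intro measurable_Pair measurable_compose[OF measurable_fst measurable_restrict_subset] measurable_snd) simp
    have fxn: "fst x n \<in> {1..N}" if "x \<in> PiE J (\<lambda>_. {1..N}) \<times> (UNIV::bool set)" for x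
    proof -
      have "fst x \<in> PiE J (\<lambda>_. {1..N})" using that by auto
      then show "fst x n \<in> {1..N}" by (rule PiE_mem) (simp add: J_def)
    qed
    have m2': "(\<lambda>(r,s). lift N IR s r n) \<in> measurable (count_space (PiE J (\<lambda>_. {1..N}) \<times> (UNIV::bool set))) (count_space {1..2*N})"
    proof -
      have "(\<lambda>(r,s). lift N IR s r n) \<in> PiE J (\<lambda>_. {1..N}) \<times> (UNIV::bool set) \<rightarrow> {1..2*N}"
      proof (rule Pi_I)
        fix x assume "x \<in> PiE J (\<lambda>_. {1..N}) \<times> (UNIV::bool set)"
        from fxn[OF this] show "(\<lambda>(r,s). lift N IR s r n) x \<in> {1..2*N}"
          by (auto simp: lift_def case_prod_beta)
      qed
      then show ?thesis by (simp add: measurable_count_space_eq1)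
    qed
    have eqM: "PiM J (\<lambda>_. count_space {1..N}) \<Otimes>\<^sub>M count_space (UNIV::bool set) = count_space (PiE J (\<lambda>_. {1..N}) \<times> (UNIV::bool set))"
      by (subst count_space_PiM_finite[OF fJ countable_finite[OF finite_atLeastAtMost]]) (rule pair_measure_count_space[OF fP fb])
    have m2: "(\<lambda>(r,s). lift N IR s r n) \<in> measurable (PiM J (\<lambda>_. count_space {1..N}) \<Otimes>\<^sub>M count_space (UNIV::bool set)) (count_space {1..2*N})"
      unfolding eqM by (rule m2')
    show "(\<lambda>x. lift N IR (snd x) (fst x) n) \<in> measurable (shift_space N \<Otimes>\<^sub>M count_space UNIV) (count_space {1..2*N})"
      unfolding eq by (rule measurable_compose[OF m1 m2])
  next
    show "(\<lambda>x n. lift N IR (snd x) (fst x) n) \<in> space (shift_space N \<Otimes>\<^sub>M count_space UNIV) \<rightarrow> (\<Pi>\<^sub>E i\<in>UNIV. space (count_space {1..2*N}))"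
    proof (rule Pi_I)
      fix x assume "x \<in> space (shift_space N \<Otimes>\<^sub>M count_space (UNIV::bool set))"
      then have h: "\<forall>k. fst x k \<in> {1..N}" by (auto simp: space_pair_measure space_shift)
      have "lift N IR (snd x) (fst x) i \<in> {1..2*N}" for i
        using h[rule_format, of i] by (auto simp: lift_def)
      then show "(\<lambda>n. lift N IR (snd x) (fst x) n) \<in> (\<Pi>\<^sub>E i\<in>UNIV. space (count_space {1..2*N}))"
        by (simp add: PiE_iff)
    qed
  qed
qed



definition cylw :: "(int \<Rightarrow> nat) set \<Rightarrow> nat \<Rightarrow> (int \<Rightarrow> nat) \<Rightarrow> (int \<Rightarrow> nat) set" where
  "cylw S n x = {\<eta>\<in>S. \<forall>k\<in>{- int n..int n}. \<eta> k = x k}"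

definition Gen :: "nat \<Rightarrow> nat set \<Rightarrow> nat set \<Rightarrow> (int \<Rightarrow> nat) set set" where
  "Gen N IP IR = insert (Sigma_A N IP IR) {cylw (Sigma_A N IP IR) n x | n x. True}"

lemma Gen_Int_stable: "Int_stable (Gen N IP IR)"
proof (rule Int_stableI)
  let ?S = "Sigma_A N IP IR"
  have key: "cylw ?S n1 x1 \<inter> cylw ?S n2 x2 \<in> Gen N IP IR" if le: "n1 \<le> n2" for n1 n2 x1 x2
  proof -
    define y where "y k = (if k \<in> {- int n1..int n1} \<and> x1 k \<noteq> x2 k then 0 else x2 k)" for k
    have "cylw ?S n1 x1 \<inter> cylw ?S n2 x2 = cylw ?S n2 y"
    proof
      show "cylw ?S n1 x1 \<inter> cylw ?S n2 x2 \<subseteq> cylw ?S n2 y"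
        unfolding cylw_def y_def using le by auto
      show "cylw ?S n2 y \<subseteq> cylw ?S n1 x1 \<inter> cylw ?S n2 x2"
      proof
        fix \<eta> assume h: "\<eta> \<in> cylw ?S n2 y"
        then have eS: "\<eta> \<in> ?S" and e: "\<forall>k\<in>{- int n2..int n2}. \<eta> k = y k" by (auto simp: cylw_def)
        have vals: "\<forall>k. \<eta> k \<in> {1..2*N}" using eS by (simp add: in_SA)
        have pos: "\<eta> k \<noteq> 0" for k using vals[rule_format, of k] by auto
        have a: "\<eta> k = x2 k \<and> (k \<in> {- int n1..int n1} \<longrightarrow> x1 k = x2 k)" if "k \<in> {- int n2..int n2}" for k
          using e[rule_format, OF that] pos[of k] unfolding y_def by (auto split: if_splits)
        have "\<forall>k\<in>{- int n1..int n1}. \<eta> k = x1 k"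
        proof
          fix k assume k: "k \<in> {- int n1..int n1}"
          then have "k \<in> {- int n2..int n2}" using le by auto
          then show "\<eta> k = x1 k" using a k by auto
        qed
        moreover have "\<forall>k\<in>{- int n2..int n2}. \<eta> k = x2 k" using a by auto
        ultimately show "\<eta> \<in> cylw ?S n1 x1 \<inter> cylw ?S n2 x2" using eS by (auto simp: cylw_def)
      qed
    qed
    then show ?thesis unfolding Gen_def by auto
  qed
  fix a b assume a: "a \<in> Gen N IP IR" and b: "b \<in> Gen N IP IR"
  have sub: "c \<subseteq> ?S" if "c \<in> Gen N IP IR" for c using that unfolding Gen_def cylw_def by auto
  show "a \<inter> b \<in> Gen N IP IR"
  proof (cases "a = ?S \<or> b = ?S")
    case True
    then show ?thesis using a b sub[OF a] sub[OF b] by (metis Int_absorb1 Int_absorb2)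
  next
    case False
    then obtain n1 x1 n2 x2 where "a = cylw ?S n1 x1" "b = cylw ?S n2 x2" using a b unfolding Gen_def by auto
    then show ?thesis using key[of n1 n2 x1 x2] key[of n2 n1 x2 x1] by (cases "n1 \<le> n2") (auto simp: Int_commute)
  qed
qed

lemma Gen_sets: "Gen N IP IR \<subseteq> sets (restrict_space (shift_space (2*N)) (Sigma_A N IP IR))"
proof
  fix c assume "c \<in> Gen N IP IR"
  then show "c \<in> sets (restrict_space (shift_space (2*N)) (Sigma_A N IP IR))"
    unfolding Gen_def
  proof
    assume "c = Sigma_A N IP IR"
    then show ?thesis using SA_sub[of N IP IR] by (auto simp: sets_restrict_space)
  next
    assume "c \<in> {cylw (Sigma_A N IP IR) n x | n x. True}"
    then obtain n x where "c = cylw (Sigma_A N IP IR) n x" by auto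
    then show ?thesis unfolding cylw_def using cylS_sets[OF SA_sub] by simp
  qed
qed

lemma gen_eq: "sets (restrict_space (shift_space (2*N)) (Sigma_A N IP IR)) = sigma_sets (Sigma_A N IP IR) (Gen N IP IR)"
proof -
  let ?S = "Sigma_A N IP IR"
  let ?\<Omega> = "\<Pi>\<^sub>E i\<in>(UNIV::int set). space (count_space {1..2*N})"
  let ?E = "{{f\<in>?\<Omega>. f i \<in> A} | i A. i \<in> (UNIV::int set) \<and> A \<in> sets (count_space {1..2*N})}"
  have sp: "sets (shift_space (2*N)) = sigma_sets ?\<Omega> ?E"
    unfolding shift_space_def by (rule sets_PiM_single)
  have Om: "?\<Omega> = space (shift_space (2*N))" by (simp add: shift_space_def space_PiM)
  have R: "sets (restrict_space (shift_space (2*N)) ?S) = sigma_sets ?S ((\<inter>) ?S ` ?E)"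
    unfolding sets_restrict_space sp
    by (rule sigma_sets_Int) (use SA_sets[of N IP IR] SA_sub[of N IP IR] sp Om in auto)
  show ?thesis
    unfolding R
  proof (rule sigma_sets_eqI)
    fix b assume "b \<in> Gen N IP IR"
    then show "b \<in> sigma_sets ?S ((\<inter>) ?S ` ?E)" using Gen_sets R by blast
  next
    fix a assume "a \<in> (\<inter>) ?S ` ?E"
    then obtain i A where a: "a = ?S \<inter> {f\<in>?\<Omega>. f i \<in> A}" by auto
    define n where "n = nat \<bar>i\<bar>"
    have i: "i \<in> {- int n..int n}" unfolding n_def by auto
    define X where "X = {x \<in> PiE {- int n..int n} (\<lambda>_. {1..2*N}). x i \<in> A}"
    have "X \<subseteq> PiE {- int n..int n} (\<lambda>_. {1..2*N})" unfolding X_def by blast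
    moreover have "finite (PiE {- int n..int n} (\<lambda>_. {1..2*N}))" by (simp add: finite_PiE)
    ultimately have fX: "finite X" by (rule finite_subset)
    have "a = \<Union> ((\<lambda>x. cylw ?S n x) ` X)"
    proof
      show "a \<subseteq> \<Union> ((\<lambda>x. cylw ?S n x) ` X)"
      proof
        fix \<eta> assume h: "\<eta> \<in> a"
        then have eS: "\<eta> \<in> ?S" and ei: "\<eta> i \<in> A" using a by auto
        have vals: "\<forall>k. \<eta> k \<in> {1..2*N}" using eS by (simp add: in_SA)
        let ?x = "restrict \<eta> {- int n..int n}"
        have "?x \<in> X" unfolding X_def using vals i ei by auto
        moreover have "\<eta> \<in> cylw ?S n ?x" using eS by (simp add: cylw_def)
        ultimately show "\<eta> \<in> \<Union> ((\<lambda>x. cylw ?S n x) ` X)" by blast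
      qed
      show "\<Union> ((\<lambda>x. cylw ?S n x) ` X) \<subseteq> a"
      proof
        fix \<eta> assume "\<eta> \<in> \<Union> ((\<lambda>x. cylw ?S n x) ` X)"
        then obtain x where x: "x \<in> X" "\<eta> \<in> cylw ?S n x" by auto
        then have eS: "\<eta> \<in> ?S" and "\<eta> i = x i" using i by (auto simp: cylw_def)
        then have "\<eta> i \<in> A" using x(1) by (auto simp: X_def)
        moreover have "\<eta> \<in> ?\<Omega>" using eS SA_sub[of N IP IR] Om by auto
        ultimately show "\<eta> \<in> a" using a eS by auto
      qed
    qed
    also have "\<dots> \<in> sigma_sets ?S (Gen N IP IR)"
    proof (rule sigma_sets_UNION)
      show "countable ((\<lambda>x. cylw ?S n x) ` X)" using fX by (simp add: countable_finite)
      show "b \<in> sigma_sets ?S (Gen N IP IR)" if "b \<in> (\<lambda>x. cylw ?S n x) ` X" for b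
        using that unfolding Gen_def by (auto intro: sigma_sets.Basic)
    qed
    finally show "a \<in> sigma_sets ?S (Gen N IP IR)" .
  qed
qed

lemma uniq_measure:
  assumes "prob_space lam1" "prob_space lam2"
    and s1: "sets lam1 = sets (restrict_space (shift_space (2*N)) (Sigma_A N IP IR))"
    and s2: "sets lam2 = sets (restrict_space (shift_space (2*N)) (Sigma_A N IP IR))"
    and eq: "\<And>n x. measure lam1 (cylw (Sigma_A N IP IR) n x) = measure lam2 (cylw (Sigma_A N IP IR) n x)"
  shows "lam1 = lam2"
proof -
  let ?S = "Sigma_A N IP IR"
  have sp1: "space lam1 = ?S" using sets_eq_imp_space_eq[OF s1] SA_sub[of N IP IR]
    by (auto simp: space_restrict_space)
  have sp2: "space lam2 = ?S" using sets_eq_imp_space_eq[OF s2] SA_sub[of N IP IR]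
    by (auto simp: space_restrict_space)
  interpret P1: prob_space lam1 by fact
  interpret P2: prob_space lam2 by fact
  show ?thesis
  proof (rule measure_eqI_generator_eq[OF Gen_Int_stable, where \<Omega> = ?S and A = "\<lambda>_. ?S"])
    show "Gen N IP IR \<subseteq> Pow ?S" unfolding Gen_def cylw_def by auto
    show "sets lam1 = sigma_sets ?S (Gen N IP IR)" using s1 gen_eq by simp
    show "sets lam2 = sigma_sets ?S (Gen N IP IR)" using s2 gen_eq by simp
    show "range (\<lambda>_. ?S) \<subseteq> Gen N IP IR" unfolding Gen_def by auto
    show "(\<Union>i::nat. ?S) = ?S" by simp
    show "emeasure lam1 ?S \<noteq> \<infinity>" for i::nat by (simp add: P1.emeasure_eq_measure)
  next
    fix X assume "X \<in> Gen N IP IR"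
    then show "emeasure lam1 X = emeasure lam2 X"
      unfolding Gen_def
    proof
      assume "X = ?S"
      then show ?thesis using P1.emeasure_space_1 P2.emeasure_space_1 sp1 sp2 by simp
    next
      assume "X \<in> {cylw ?S n x | n x. True}"
      then obtain n x where "X = cylw ?S n x" by auto
      then show ?thesis using eq[of n x] by (simp add: P1.emeasure_eq_measure P2.emeasure_eq_measure)
    qed
  qed
qed



lemma sym_flip:
  assumes "symmetric_params N p P" "a \<in> {1..2*N}" "b \<in> {1..2*N}"
  shows "P (flip N a) (flip N b) = P a b \<and> p (flip N a) = p a"
proof -
  have pp: "\<forall>i\<in>{1..N}. p i = p (i+N)"
    and PP: "\<forall>i\<in>{1..N}. \<forall>j\<in>{1..N}. P i j = P (i+N) (j+N) \<and> P i (j+N) = P (i+N) j"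
    using assms(1) unfolding symmetric_params_def by auto
  have "p (flip N a) = p a"
  proof (cases "a \<le> N")
    case True
    then have "a \<in> {1..N}" using assms(2) by auto
    then have "p a = p (a+N)" using pp by blast
    then show ?thesis using True by (simp add: flip_def)
  next
    case False
    then have i: "a - N \<in> {1..N}" and e: "a - N + N = a" using assms(2) by auto
    have "p (a - N) = p (a - N + N)" using pp i by blast
    then show ?thesis using False e by (simp add: flip_def)
  qed
  moreover have "P (flip N a) (flip N b) = P a b"
  proof (cases "a \<le> N"; cases "b \<le> N")
    assume a: "a \<le> N" and b: "b \<le> N"
    then have "a \<in> {1..N}" "b \<in> {1..N}" using assms(2,3) by auto
    then have "P a b = P (a+N) (b+N)" using PP by blast
    then show ?thesis using a b by (simp add: flip_def)
  next
    assume a: "a \<le> N" and b: "\<not> b \<le> N"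
    then have "b - N \<in> {1..N}" and e: "b - N + N = b" and "a \<in> {1..N}" using assms(2,3) by auto
    then have "P a (b - N + N) = P (a+N) (b - N)" using PP by blast
    then show ?thesis using a b e by (simp add: flip_def)
  next
    assume a: "\<not> a \<le> N" and b: "b \<le> N"
    then have "a - N \<in> {1..N}" and e: "a - N + N = a" and "b \<in> {1..N}" using assms(2,3) by auto
    then have "P (a - N) (b + N) = P (a - N + N) b" using PP by blast
    then show ?thesis using a b e by (simp add: flip_def)
  next
    assume a: "\<not> a \<le> N" and b: "\<not> b \<le> N"
    then have "a - N \<in> {1..N}" and e: "a - N + N = a" and "b - N \<in> {1..N}" and e2: "b - N + N = b"
      using assms(2,3) by auto
    then have "P (a - N) (b - N) = P (a - N + N) (b - N + N)" using PP by blast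
    then show ?thesis using a b e e2 by (simp add: flip_def)
  qed
  ultimately show ?thesis by simp
qed

lemma sym_cyl:
  assumes dis: "IP \<inter> IR = {}" and sub: "IP \<subseteq> {1..N}" "IR \<subseteq> {1..N}"
    and mm: "markov_measure (2*N) (trans_A N IP IR) (Sigma_A N IP IR) lam p P"
    and sy: "symmetric_params N p P"
    and d: "distr lam (shift_space N) (proj N) = lam0"
    and om: "\<omega> \<in> Sigma_A N IP IR" and mn: "m \<le> n"
  shows "measure lam {\<eta>\<in>Sigma_A N IP IR. \<forall>k\<in>{m..n}. \<eta> k = \<omega> k}
     = measure lam0 {\<xi>\<in>space (shift_space N). \<forall>k\<in>{m..n}. \<xi> k = bar N (\<omega> k)} / 2"
proof -
  let ?S = "Sigma_A N IP IR"
  let ?A = "{\<eta>\<in>?S. \<forall>k\<in>{m..n}. \<eta> k = \<omega> k}"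
  let ?B = "{\<eta>\<in>?S. \<forall>k\<in>{m..n}. \<eta> k = fl N \<omega> k}"
  let ?Z = "{\<xi>\<in>space (shift_space N). \<forall>k\<in>{m..n}. \<xi> k = bar N (\<omega> k)}"
  have ps: "prob_space lam" and se: "sets lam = sets (restrict_space (shift_space (2*N)) ?S)"
    and F: "\<forall>\<omega>\<in>?S. \<forall>m n. m \<le> n \<longrightarrow> measure lam {\<eta>\<in>?S. \<forall>k\<in>{m..n}. \<eta> k = \<omega> k}
          = p (\<omega> m) * (\<Prod>k\<in>{m..<n}. P (\<omega> k) (\<omega> (k+1)))"
    using mm unfolding markov_measure_def by auto
  interpret prob_space lam by (rule ps)
  have spl: "space lam = ?S" using sets_eq_imp_space_eq[OF se] SA_sub[of N IP IR]
    by (auto simp: space_restrict_space)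
  have pm: "proj N \<in> measurable lam (shift_space N)"
    using proj_meas[of N ?S] measurable_cong_sets[OF se refl] by blast
  have Zs: "?Z \<in> sets (shift_space N)" by (rule cyl_sets)
  have "measure lam0 ?Z = measure lam (proj N -` ?Z \<inter> space lam)"
    using measure_distr[OF pm Zs] d by simp
  also have "proj N -` ?Z \<inter> space lam = {\<eta>\<in>?S. \<forall>k\<in>{m..n}. bar N (\<eta> k) = bar N (\<omega> k)}"
  proof -
    have "proj N \<eta> \<in> space (shift_space N)" if "\<eta> \<in> ?S" for \<eta>
      using measurable_space[OF proj_meas0] that SA_sub by blast
    then show ?thesis unfolding spl by (auto simp: proj_def)
  qed
  also have "\<dots> = ?A \<union> ?B" by (rule preimage_cyl[OF dis sub om])
  finally have "measure lam0 ?Z = measure lam (?A \<union> ?B)" .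
  also have "\<dots> = measure lam ?A + measure lam ?B"
    by (rule finite_measure_Union) (use cylS_sets[OF SA_sub] se cyl_disj[OF om mn] in auto)
  also have "measure lam ?B = measure lam ?A"
  proof -
    have ov: "\<forall>k. \<omega> k \<in> {1..2*N}" using om by (simp add: in_SA)
    have "measure lam ?B = p (fl N \<omega> m) * (\<Prod>k\<in>{m..<n}. P (fl N \<omega> k) (fl N \<omega> (k+1)))"
      using F fl_S[OF sub om] mn by blast
    also have "\<dots> = p (\<omega> m) * (\<Prod>k\<in>{m..<n}. P (\<omega> k) (\<omega> (k+1)))"
    proof -
      have "p (flip N (\<omega> m)) = p (\<omega> m)" using sym_flip[OF sy] ov by blast
      moreover have "P (flip N (\<omega> k)) (flip N (\<omega> (k+1))) = P (\<omega> k) (\<omega> (k+1))" for k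
        using sym_flip[OF sy] ov by blast
      ultimately show ?thesis unfolding fl_def by simp
    qed
    also have "\<dots> = measure lam ?A" using F om mn by simp
    finally show ?thesis .
  qed
  finally show ?thesis by simp
qed

lemma sym_unique:
  assumes dis: "IP \<inter> IR = {}" and sub: "IP \<subseteq> {1..N}" "IR \<subseteq> {1..N}"
    and s1: "symmetric_markov_measure N IP IR lam1" and d1: "distr lam1 (shift_space N) (proj N) = lam0"
    and s2: "symmetric_markov_measure N IP IR lam2" and d2: "distr lam2 (shift_space N) (proj N) = lam0"
  shows "lam1 = lam2"
proof -
  obtain p1 P1 where m1: "markov_measure (2*N) (trans_A N IP IR) (Sigma_A N IP IR) lam1 p1 P1" and y1: "symmetric_params N p1 P1"
    using s1 unfolding symmetric_markov_measure_def by blast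
  obtain p2 P2 where m2: "markov_measure (2*N) (trans_A N IP IR) (Sigma_A N IP IR) lam2 p2 P2" and y2: "symmetric_params N p2 P2"
    using s2 unfolding symmetric_markov_measure_def by blast
  show ?thesis
  proof (rule uniq_measure)
    show "prob_space lam1" "prob_space lam2"
      "sets lam1 = sets (restrict_space (shift_space (2*N)) (Sigma_A N IP IR))"
      "sets lam2 = sets (restrict_space (shift_space (2*N)) (Sigma_A N IP IR))"
      using m1 m2 unfolding markov_measure_def by auto
    fix n x
    show "measure lam1 (cylw (Sigma_A N IP IR) n x) = measure lam2 (cylw (Sigma_A N IP IR) n x)"
    proof (cases "cylw (Sigma_A N IP IR) n x = {}")
      case True then show ?thesis by simp
    next
      case False
      then obtain \<omega> where w: "\<omega> \<in> cylw (Sigma_A N IP IR) n x" by blast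
      then have oS: "\<omega> \<in> Sigma_A N IP IR" by (simp add: cylw_def)
      have ce: "cylw (Sigma_A N IP IR) n x = {\<eta>\<in>Sigma_A N IP IR. \<forall>k\<in>{- int n..int n}. \<eta> k = \<omega> k}"
        using w by (auto simp: cylw_def)
      show ?thesis unfolding ce
        using sym_cyl[OF dis sub m1 y1 d1 oS, of "- int n" "int n"] sym_cyl[OF dis sub m2 y2 d2 oS, of "- int n" "int n"]
        by simp
    qed
  qed
qed



lemma sets_restrict_space_space: "sets (restrict_space M (space M)) = sets M"
  unfolding sets_restrict_space using sets.sets_into_space[of _ M] by (auto simp: image_iff)

lemma sum_2N: fixes f :: "nat \<Rightarrow> 'a::comm_monoid_add" and N :: nat shows "(\<Sum>a=1..2*N. f a) = (\<Sum>i=1..N. f i) + (\<Sum>i=1..N. f (i+N))"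
proof -
  have "{1..2*N} = {1..N} \<union> {N+1..N+N}" by auto
  then have "(\<Sum>a=1..2*N. f a) = (\<Sum>a=1..N. f a) + (\<Sum>a=N+1..N+N. f a)"
    by (simp add: sum.union_disjoint)
  also have "(\<Sum>a=N+1..N+N. f a) = (\<Sum>i=1..N. f (i+N))"
    using sum.shift_bounds_cl_nat_ivl[of f 1 N N] by (simp add: add.commute)
  finally show ?thesis .
qed

lemma trans_xor:
  assumes "IP \<inter> IR = {}" "IP \<union> IR = {1..N}" "a \<in> {1..2*N}" "i \<in> {1..N}"
  shows "trans_A N IP IR a i \<noteq> trans_A N IP IR a (i+N)"
proof (cases "a \<le> N")
  case True
  then have "a \<in> {1..N}" using assms by auto
  then have "a \<in> IP \<or> a \<in> IR" using assms(2) by blast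
  then show ?thesis using assms True unfolding trans_A_def by auto
next
  case False
  then have "a - N \<in> {1..N}" using assms by auto
  then have "a - N \<in> IP \<or> a - N \<in> IR" using assms(2) by blast
  then show ?thesis using assms False unfolding trans_A_def by auto
qed

lemma bar_small[simp]: "i \<le> N \<Longrightarrow> bar N i = i" by (simp add: bar_def)
lemma bar_big[simp]: "0 < i \<Longrightarrow> bar N (i + N) = i" by (simp add: bar_def)



lemma bar_range: "a \<in> {1..2*N} \<Longrightarrow> bar N a \<in> {1..N}"
  by (auto simp: bar_def)

lemma exist_cyl:
  assumes dis: "IP \<inter> IR = {}" and cov: "IP \<union> IR = {1..N}"
    and mm0: "markov_measure N (\<lambda>_ _. True) (space (shift_space N)) lam0 q Q"
    and om: "\<omega> \<in> Sigma_A N IP IR" and mn: "m \<le> n"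
  defines "M \<equiv> lam0 \<Otimes>\<^sub>M measure_pmf (bernoulli_pmf (1/2))"
  defines "Fm \<equiv> (\<lambda>x::(int\<Rightarrow>nat)\<times>bool. lift N IR (snd x) (fst x))"
  shows "measure (distr M (restrict_space (shift_space (2*N)) (Sigma_A N IP IR)) Fm)
            {\<eta>\<in>Sigma_A N IP IR. \<forall>k\<in>{m..n}. \<eta> k = \<omega> k}
        = q (bar N (\<omega> m)) / 2 * (\<Prod>k\<in>{m..<n}. Q (bar N (\<omega> k)) (bar N (\<omega> (k+1))))"
proof -
  let ?S = "Sigma_A N IP IR"
  let ?T = "restrict_space (shift_space (2*N)) ?S"
  let ?B = "measure_pmf (bernoulli_pmf (1/2))"
  have q0: "\<forall>i\<in>{1..N}. q i \<ge> 0" and ps0: "prob_space lam0"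
    and se0': "sets lam0 = sets (restrict_space (shift_space N) (space (shift_space N)))"
    and F0: "\<forall>\<omega>\<in>space (shift_space N). \<forall>m n. m \<le> n \<longrightarrow> measure lam0 {\<eta>\<in>space (shift_space N). \<forall>k\<in>{m..n}. \<eta> k = \<omega> k}
          = q (\<omega> m) * (\<Prod>k\<in>{m..<n}. Q (\<omega> k) (\<omega> (k+1)))"
    and Q0: "\<forall>i\<in>{1..N}. \<forall>j\<in>{1..N}. Q i j \<ge> 0"
    using mm0 unfolding markov_measure_def by blast+
  have se0: "sets lam0 = sets (shift_space N)" using se0' sets_restrict_space_space by simp
  have sp0: "space lam0 = space (shift_space N)" by (rule sets_eq_imp_space_eq[OF se0])
  have psB: "prob_space ?B" by (rule prob_space_measure_pmf)
  have seM: "sets M = sets (shift_space N \<Otimes>\<^sub>M count_space UNIV)"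
    unfolding M_def by (rule sets_pair_measure_cong[OF se0 sets_measure_pmf_count_space])
  have spM: "space M = space (shift_space N) \<times> UNIV"
    unfolding M_def by (simp add: space_pair_measure sp0)
  have Fmeas: "Fm \<in> measurable M ?T"
    using lift_meas[OF cov] measurable_cong_sets[OF seM refl] unfolding Fm_def by blast
  let ?A = "{\<eta>\<in>?S. \<forall>k\<in>{m..n}. \<eta> k = \<omega> k}"
  have As: "?A \<in> sets ?T" by (rule cylS_sets[OF SA_sub])
  define X where "X = Fm -` ?A \<inter> space M"
  have Xs: "X \<in> sets M" unfolding X_def by (rule measurable_sets[OF Fmeas As])
  then have Xs': "X \<in> sets (lam0 \<Otimes>\<^sub>M ?B)" unfolding M_def .
  have "measure (distr M ?T Fm) ?A = measure M X" unfolding X_def by (rule measure_distr[OF Fmeas As])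
  define Asl where "Asl s = {\<xi>\<in>space (shift_space N). \<forall>k\<in>{m..n}. lift N IR s \<xi> k = \<omega> k}" for s
  have slice: "(\<lambda>\<xi>. (\<xi>, s)) -` X = Asl s" for s
    unfolding X_def Asl_def Fm_def spM using lift_S[OF cov] by auto
  have Asls: "Asl s \<in> sets lam0" for s using sets_Pair2[OF Xs', of s] slice by simp
  interpret PS: pair_sigma_finite lam0 ?B
    by (intro pair_sigma_finite.intro prob_space_imp_sigma_finite ps0 psB)
  interpret P0: prob_space lam0 by (rule ps0)
  let ?Z = "{\<xi>\<in>space (shift_space N). \<forall>k\<in>{m..n}. \<xi> k = proj N \<omega> k}"
  have pw: "proj N \<omega> \<in> space (shift_space N)"
    using measurable_space[OF proj_meas0] om SA_sub by blast
  define V where "V = q (bar N (\<omega> m)) * (\<Prod>k\<in>{m..<n}. Q (bar N (\<omega> k)) (bar N (\<omega> (k+1))))"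
  have mZ: "measure lam0 ?Z = V" using F0 pw mn unfolding V_def by (simp add: proj_def)
  have V0: "V \<ge> 0" using mZ by auto
  have Zeq: "?Z = Asl True \<union> Asl False" and Zdis: "Asl True \<inter> Asl False = {}"
    using lift_cyl[OF dis cov om mn] unfolding Asl_def by (simp_all add: proj_def)
  have "emeasure M X = (\<integral>\<^sup>+s. emeasure lam0 (Asl s) \<partial>?B)"
    using PS.emeasure_pair_measure_alt2[OF Xs'] slice unfolding M_def by simp
  also have "\<dots> = (\<Sum>s\<in>UNIV. emeasure lam0 (Asl s) * ennreal (1/2))"
    by (subst nn_integral_measure_pmf_finite) auto
  also have "\<dots> = (emeasure lam0 (Asl True) + emeasure lam0 (Asl False)) * ennreal (1/2)"
    by (simp add: UNIV_bool distrib_right)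
  also have "emeasure lam0 (Asl True) + emeasure lam0 (Asl False) = emeasure lam0 ?Z"
    unfolding Zeq by (rule plus_emeasure[OF Asls Asls Zdis])
  also have "\<dots> = ennreal V" using mZ P0.emeasure_eq_measure by simp
  finally have e1: "emeasure M X = ennreal V * ennreal (1/2)" .
  have "ennreal V * ennreal (1/2) = ennreal (V * (1/2))"
    by (rule ennreal_mult[symmetric]) (use V0 in auto)
  then have "emeasure M X = ennreal (V * (1/2))" using e1 by simp
  then have "measure M X = V * (1/2)" using V0 by (simp add: measure_def)
  then show ?thesis using \<open>measure (distr M ?T Fm) ?A = measure M X\<close> unfolding V_def by simp
qed



lemma exist:
  assumes dis: "IP \<inter> IR = {}" and cov: "IP \<union> IR = {1..N}"
    and mm0: "markov_measure N (\<lambda>_ _. True) (space (shift_space N)) lam0 q Q"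
  shows "\<exists>lam. symmetric_markov_measure N IP IR lam \<and> distr lam (shift_space N) (proj N) = lam0"
proof -
  let ?S = "Sigma_A N IP IR"
  let ?T = "restrict_space (shift_space (2*N)) ?S"
  let ?B = "measure_pmf (bernoulli_pmf (1/2))"
  define M where "M = lam0 \<Otimes>\<^sub>M ?B"
  define Fm where "Fm = (\<lambda>x::(int\<Rightarrow>nat)\<times>bool. lift N IR (snd x) (fst x))"
  define lam where "lam = distr M ?T Fm"
  define p where "p a = q (bar N a) / 2" for a
  define P where "P a b = (if trans_A N IP IR a b then Q (bar N a) (bar N b) else 0)" for a b
  have sub: "IP \<subseteq> {1..N}" "IR \<subseteq> {1..N}" using cov by auto
  have q0: "\<forall>i\<in>{1..N}. q i \<ge> 0" and q1: "(\<Sum>i=1..N. q i) = 1" and ps0: "prob_space lam0"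
    and se0': "sets lam0 = sets (restrict_space (shift_space N) (space (shift_space N)))"
    and Q0: "\<forall>i\<in>{1..N}. \<forall>j\<in>{1..N}. Q i j \<ge> 0"
    and Q1: "\<forall>i\<in>{1..N}. (\<Sum>j=1..N. Q i j) = 1"
    using mm0 unfolding markov_measure_def by blast+
  have se0: "sets lam0 = sets (shift_space N)" using se0' sets_restrict_space_space by simp
  have sp0: "space lam0 = space (shift_space N)" by (rule sets_eq_imp_space_eq[OF se0])
  have psB: "prob_space ?B" by (rule prob_space_measure_pmf)
  have psM: "prob_space M" unfolding M_def by (rule prob_space_pair[OF ps0 psB])
  have seM: "sets M = sets (shift_space N \<Otimes>\<^sub>M count_space UNIV)"
    unfolding M_def by (rule sets_pair_measure_cong[OF se0 sets_measure_pmf_count_space])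
  have spM: "space M = space (shift_space N) \<times> UNIV"
    unfolding M_def by (simp add: space_pair_measure sp0)
  have Fmeas: "Fm \<in> measurable M ?T"
    using lift_meas[OF cov] measurable_cong_sets[OF seM refl] unfolding Fm_def by blast
  have psl: "prob_space lam" unfolding lam_def by (rule prob_space.prob_space_distr[OF psM Fmeas])
  have sel: "sets lam = sets ?T" by (simp add: lam_def)
  have dist: "distr lam (shift_space N) (proj N) = lam0"
  proof -
    have "distr lam (shift_space N) (proj N) = distr M (shift_space N) (proj N \<circ> Fm)"
      unfolding lam_def by (rule distr_distr[OF proj_meas Fmeas])
    also have "\<dots> = distr M lam0 fst"
    proof (rule distr_cong)
      show "sets (shift_space N) = sets lam0" using se0 by simp
      fix x assume "x \<in> space M"
      then have "\<forall>k. fst x k \<in> {1..N}" using spM by (auto simp: space_shift)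
      then show "(proj N \<circ> Fm) x = fst x"
        unfolding Fm_def proj_def by (auto simp: bar_lift)
    qed simp
    also have "\<dots> = lam0" unfolding M_def by (rule prob_space.distr_pair_fst[OF psB])
    finally show ?thesis .
  qed
  have cyl: "measure lam {\<eta>\<in>?S. \<forall>k\<in>{m..n}. \<eta> k = \<omega> k} = p (\<omega> m) * (\<Prod>k\<in>{m..<n}. P (\<omega> k) (\<omega> (k+1)))"
    if om: "\<omega> \<in> ?S" and mn: "m \<le> n" for \<omega> m n
  proof -
    have tr: "\<forall>k. trans_A N IP IR (\<omega> k) (\<omega> (k+1))" using om by (simp add: in_SA)
    have "measure lam {\<eta>\<in>?S. \<forall>k\<in>{m..n}. \<eta> k = \<omega> k}
        = q (bar N (\<omega> m)) / 2 * (\<Prod>k\<in>{m..<n}. Q (bar N (\<omega> k)) (bar N (\<omega> (k+1))))"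
      unfolding lam_def M_def Fm_def by (rule exist_cyl[OF dis cov mm0 om mn])
    also have "\<dots> = p (\<omega> m) * (\<Prod>k\<in>{m..<n}. P (\<omega> k) (\<omega> (k+1)))"
      unfolding p_def P_def using tr by simp
    finally show ?thesis .
  qed
  have mm: "markov_measure (2*N) (trans_A N IP IR) ?S lam p P"
    unfolding markov_measure_def
  proof (intro conjI)
    show "\<forall>i\<in>{1..2*N}. p i \<ge> 0" using q0 bar_range unfolding p_def by fastforce
    show "(\<Sum>i=1..2*N. p i) = 1"
    proof -
      have "(\<Sum>i=1..2*N. p i) = (\<Sum>i=1..N. p i) + (\<Sum>i=1..N. p (i+N))" by (rule sum_2N)
      also have "(\<Sum>i=1..N. p i) = (\<Sum>i=1..N. q i / 2)" unfolding p_def by (rule sum.cong) auto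
      also have "(\<Sum>i=1..N. p (i+N)) = (\<Sum>i=1..N. q i / 2)" unfolding p_def by (rule sum.cong) auto
      also have "(\<Sum>i=1..N. q i / 2) + (\<Sum>i=1..N. q i / 2) = (\<Sum>i=1..N. q i)"
        by (simp add: sum_divide_distrib[symmetric])
      finally show ?thesis using q1 by simp
    qed
    show "\<forall>i\<in>{1..2*N}. \<forall>j\<in>{1..2*N}. P i j \<ge> 0"
      using Q0 bar_range unfolding P_def by fastforce
    show "\<forall>i\<in>{1..2*N}. (\<Sum>j=1..2*N. P i j) = 1"
    proof
      fix a assume a: "a \<in> {1..2*N}"
      have "(\<Sum>j=1..2*N. P a j) = (\<Sum>j=1..N. P a j) + (\<Sum>j=1..N. P a (j+N))" by (rule sum_2N)
      also have "\<dots> = (\<Sum>j=1..N. P a j + P a (j+N))" by (simp add: sum.distrib)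
      also have "\<dots> = (\<Sum>j=1..N. Q (bar N a) j)"
      proof (rule sum.cong)
        fix j assume j: "j \<in> {1..N}"
        have "trans_A N IP IR a j \<noteq> trans_A N IP IR a (j+N)" by (rule trans_xor[OF dis cov a j])
        then show "P a j + P a (j+N) = Q (bar N a) j" unfolding P_def using j by auto
      qed simp
      also have "\<dots> = 1" using Q1 bar_range[OF a] by blast
      finally show "(\<Sum>j=1..2*N. P a j) = 1" .
    qed
    show "\<forall>i\<in>{1..2*N}. \<forall>j\<in>{1..2*N}. \<not> trans_A N IP IR i j \<longrightarrow> P i j = 0"
      unfolding P_def by simp
    show "prob_space lam" by (rule psl)
    show "sets lam = sets ?T" by (rule sel)
    show "\<forall>\<omega>\<in>?S. \<forall>m n. m \<le> n \<longrightarrow> measure lam {\<eta>\<in>?S. \<forall>k\<in>{m..n}. \<eta> k = \<omega> k}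
          = p (\<omega> m) * (\<Prod>k\<in>{m..<n}. P (\<omega> k) (\<omega> (k+1)))"
      using cyl by blast
  qed
  have sy: "symmetric_params N p P"
    unfolding symmetric_params_def
  proof (intro conjI ballI)
    fix i assume i: "i \<in> {1..N}"
    then show "p i = p (i+N)" unfolding p_def by simp
    fix j assume j: "j \<in> {1..N}"
    have t1: "trans_A N IP IR i j = trans_A N IP IR (i+N) (j+N)"
      using i j sub unfolding trans_A_def by auto
    have t2: "trans_A N IP IR i (j+N) = trans_A N IP IR (i+N) j"
      using i j sub unfolding trans_A_def by auto
    show "P i j = P (i+N) (j+N)" unfolding P_def using t1 i j by simp
    show "P i (j+N) = P (i+N) j" unfolding P_def using t2 i j by simp
  qed
  show ?thesis
    using mm sy dist unfolding symmetric_markov_measure_def by blast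
qed

theorem lemma3p13:
  fixes N :: nat and f :: "nat \<Rightarrow> real \<Rightarrow> real" and lam0 :: "(int \<Rightarrow> nat) measure"
  assumes "\<forall>i\<in>{1..N}. C1_diffeo_01 (f i)"
    and "\<exists>q Q. markov_measure N (\<lambda>_ _. True) (space (shift_space N)) lam0 q Q"
  shows "\<exists>!lam. symmetric_markov_measure N (orient_pres N f) (orient_rev N f) lam
                 \<and> distr lam (shift_space N) (proj N) = lam0"
proof -
  let ?IP = "orient_pres N f" and ?IR = "orient_rev N f"
  have dis: "?IP \<inter> ?IR = {}" by (rule orient_disj)
  have cov: "?IP \<union> ?IR = {1..N}" by (rule orient_cover[OF assms(1)])
  have sub: "?IP \<subseteq> {1..N}" "?IR \<subseteq> {1..N}" using cov by auto
  obtain q Q where mm0: "markov_measure N (\<lambda>_ _. True) (space (shift_space N)) lam0 q Q"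
    using assms(2) by blast
  obtain lam where ex: "symmetric_markov_measure N ?IP ?IR lam \<and> distr lam (shift_space N) (proj N) = lam0"
    using exist[OF dis cov mm0] by blast
  show ?thesis
  proof (rule ex1I[of _ lam])
    show "symmetric_markov_measure N ?IP ?IR lam \<and> distr lam (shift_space N) (proj N) = lam0" by (rule ex)
    fix lam' assume h: "symmetric_markov_measure N ?IP ?IR lam' \<and> distr lam' (shift_space N) (proj N) = lam0"
    show "lam' = lam"
      using sym_unique[OF dis sub, of lam' lam0 lam] h ex by blast
  qed
qed

end
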